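(* Let $H(X,Y,q)$ be the mirror curve polynomial described in the context, with Newton polygon $P$. There is $\epsilon>0$ such that for every $q\in(\mathbb{C}^* )^p$ with $|q_k|<\epsilon$ for all $k$, the (injective) map sending a connected component of $\mathbb{R}^2\setminus A_H$ to its order is surjective onto $P\cap\mathbb{Z}^2$; i.e. every lattice point of $P$ is the order of some connected component of $\mathbb{R}^2\setminus A_H$.
   Context: Let $P\subset\mathbb{R}^2$ be a convex lattice polygon with a unimodular triangulation $T_\Sigma$ (triangles with lattice vertices and area $1/2$; vertex set $P\cap\mathbb{Z}^2$), encoding a smooth toric Calabi–Yau 3-fold. Write $P\cap\mathbb{Z}^2=\{b_1,\dots,b_{p+3}\}$, $b_i=(m_i,n_i)$, with $b_1=(1,0)$, $b_2=(0,1)$, $b_3=(0,0)$ and $\sigma_1=\{b_1,b_2,b_3\}$ a triangle of $T_\Sigma$. Let $L=\ker(\mathbb{Z}^{p+3}\to\mathbb{Z}^3,\ e_i\mapsto(m_i,n_i,1))$, $D_i\in L^\vee$ the restriction of the $i$-th coordinate functional; for a triangle $\sigma$ with vertex index set $I'_\sigma$, $\{D_j:j\notin I'_\sigma\}$ is a basis of $L^\vee\otimes\mathbb{Q}$. Fix $H_1,\dots,H_p\in L^\vee\otimes\mathbb{Q}$ with $H_k=\sum_{j\notin I'_\sigma}s^\sigma_{k,j}D_j$, $s^\sigma_{k,j}\in\mathbb{Z}_{\ge0}$, $(s^\sigma_{k,j})$ nondegenerate, for every triangle $\sigma$. Set $a_i(q)=1$ ($i=1,2,3$), $a_i(q)=\prod_k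 q_k^{s^{\sigma_1}_{k,i}}$ ($i\ge4$), and $H(X,Y,q)=\sum_{i=1}^{p+3}a_i(q)X^{m_i}Y^{n_i}$. The amoeba of $H$ is $A_H=\mathrm{Log}(\{H=0\})\subset\mathbb{R}^2$, $\mathrm{Log}(x,y)=(\log|x|,\log|y|)$. For $w\in\mathbb{R}^2\setminus A_H$ its order is $v(w)\in\mathbb{Z}^2$, $v_j(w)=\frac{1}{(2\pi i)^2}\int_{\mathrm{Log}^{-1}(w)}\frac{z_j\partial_{z_j}H}{H}\frac{dz_1}{z_1}\wedge\frac{dz_2}{z_2}$ (with $z=(X,Y)$); it is constant on connected components of $\mathbb{R}^2\setminus A_H$, lies in $P$, and distinct components have distinct orders. *)

theory Defs
  imports "HOL-Analysis.Analysis"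
begin

definition lpt :: "(nat \<Rightarrow> int) \<Rightarrow> (nat \<Rightarrow> int) \<Rightarrow> nat \<Rightarrow> real \<times> real" where
  "lpt m n i = (real_of_int (m i), real_of_int (n i))"

definition unimodular_triangle :: "(nat \<Rightarrow> int) \<Rightarrow> (nat \<Rightarrow> int) \<Rightarrow> nat set \<Rightarrow> bool" where
  "unimodular_triangle m n \<sigma> \<longleftrightarrow>
     (\<exists>i j k. \<sigma> = {i, j, k} \<and> i \<noteq> j \<and> i \<noteq> k \<and> j \<noteq> k \<and>
        \<bar>(m j - m i) * (n k - n i) - (m k - m i) * (n j - n i)\<bar> = 1)"

definition unimodular_triangulation ::
  "(nat \<Rightarrow> int) \<Rightarrow> (nat \<Rightarrow> int) \<Rightarrow> nat set \<Rightarrow> nat set set \<Rightarrow> bool" where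
  "unimodular_triangulation m n V T \<longleftrightarrow>
     finite T \<and>
     (\<forall>\<sigma>\<in>T. \<sigma> \<subseteq> V \<and> unimodular_triangle m n \<sigma>) \<and>
     \<Union>T = V \<and>
     (\<Union>\<sigma>\<in>T. convex hull (lpt m n ` \<sigma>)) = convex hull (lpt m n ` V) \<and>
     (\<forall>\<sigma>\<in>T. \<forall>\<tau>\<in>T. convex hull (lpt m n ` \<sigma>) \<inter> convex hull (lpt m n ` \<tau>)
                      = convex hull (lpt m n ` (\<sigma> \<inter> \<tau>)))"

text \<open>The lattice L = ker(Z^N -> Z^3, e_i |-> (m_i, n_i, 1)), vectors indexed by {1..N}.\<close>
definition lattice_L :: "(nat \<Rightarrow> int) \<Rightarrow> (nat \<Rightarrow> int) \<Rightarrow> nat \<Rightarrow> (nat \<Rightarrow> int) set" where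
  "lattice_L m n N = {l. (\<forall>i. i \<notin> {1..N} \<longrightarrow> l i = 0) \<and>
                        (\<Sum>i=1..N. l i * m i) = 0 \<and> (\<Sum>i=1..N. l i * n i) = 0 \<and>
                        (\<Sum>i=1..N. l i) = 0}"

definition det_sq :: "nat \<Rightarrow> (nat \<Rightarrow> nat \<Rightarrow> rat) \<Rightarrow> rat" where
  "det_sq d M = (\<Sum>\<pi> | \<pi> permutes {0..<d}. of_int (sign \<pi>) * (\<Prod>i<d. M i (\<pi> i)))"

text \<open>The p x p matrix (s^sigma_{k,j}), rows k = 1..p, columns j in {1..p+3} - sigma
  (listed in increasing order).\<close>
definition s_matrix :: "nat \<Rightarrow> (nat set \<Rightarrow> nat \<Rightarrow> nat \<Rightarrow> nat) \<Rightarrow> nat set \<Rightarrow> nat \<Rightarrow> nat \<Rightarrow> rat" where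
  "s_matrix p s \<sigma> r c = of_nat (s \<sigma> (r + 1) (sorted_list_of_set ({1..p+3} - \<sigma>) ! c))"

definition amoeba :: "(complex \<Rightarrow> complex \<Rightarrow> complex) \<Rightarrow> (real \<times> real) set" where
  "amoeba F = {(ln (cmod x), ln (cmod y)) | x y. x \<noteq> 0 \<and> y \<noteq> 0 \<and> F x y = 0}"

text \<open>Order of w: v_j(w) = (2 pi i)^(-2) \<integral>_{Log^{-1}(w)} z_j d_{z_j}F / F dz1/z1 dz2/z2.
  Parametrising Log^{-1}(w) by z_j = exp(w_j + i t_j), t in [0,2pi]^2, gives
  dz_j/z_j = i dt_j, so v_j(w) = (4 pi^2)^(-1) \<integral>\<integral> z_j d_{z_j}F / F dt1 dt2.\<close>
definition order :: "(complex \<Rightarrow> complex \<Rightarrow> complex) \<Rightarrow> real \<times> real \<Rightarrow> complex \<times> complex" where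
  "order F w =
    (let X = (\<lambda>t::real. exp (complex_of_real (fst w) + \<i> * complex_of_real t));
         Y = (\<lambda>t::real. exp (complex_of_real (snd w) + \<i> * complex_of_real t))
     in ( integral ({0..2*pi} \<times> {0..2*pi})
            (\<lambda>(t1, t2). X t1 * deriv (\<lambda>x. F x (Y t2)) (X t1) / F (X t1) (Y t2))
            / complex_of_real (4 * pi\<^sup>2),
          integral ({0..2*pi} \<times> {0..2*pi})
            (\<lambda>(t1, t2). Y t2 * deriv (\<lambda>y. F (X t1) y) (Y t2) / F (X t1) (Y t2))
            / complex_of_real (4 * pi\<^sup>2)))"

definition mirror_H :: "nat \<Rightarrow> (nat \<Rightarrow> int) \<Rightarrow> (nat \<Rightarrow> int) \<Rightarrow> (nat \<Rightarrow> nat \<Rightarrow> nat)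
                        \<Rightarrow> (nat \<Rightarrow> complex) \<Rightarrow> complex \<Rightarrow> complex \<Rightarrow> complex" where
  "mirror_H p m n s1 q X Y =
     (\<Sum>i=1..p+3. (if i \<le> 3 then 1 else (\<Prod>k=1..p. q k ^ s1 k i)) * X powi m i * Y powi n i)"

end

theory Submission
  imports Defs
begin


lemma circle_int:
  fixes f f' :: "complex \<Rightarrow> complex" and c :: complex and k :: int and r :: real
  assumes D: "\<And>x. cmod x = exp r \<Longrightarrow> (f has_field_derivative f' x) (at x)"
    and dom: "\<And>x. cmod x = exp r \<Longrightarrow> cmod (f x - c * x powi k) < cmod (c * x powi k)"
  shows "((\<lambda>t. exp (complex_of_real r + \<i> * complex_of_real t) * f' (exp (complex_of_real r + \<i> * complex_of_real t))
             / f (exp (complex_of_real r + \<i> * complex_of_real t))) has_integral (of_real (2*pi) * of_int k)) {0..2*pi}"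
proof -
  define X where "X = (\<lambda>t::real. exp (complex_of_real r + \<i> * complex_of_real t))"
  have normX: "cmod (X t) = exp r" for t unfolding X_def by (simp add: norm_exp_eq_Re)
  have X0: "X t \<noteq> 0" for t unfolding X_def by simp
  have c0: "c \<noteq> 0" using dom[OF normX[of 0]] by auto
  define u where "u = (\<lambda>x. f x / (c * x powi k))"
  define U where "U = (\<lambda>x. (f' x * (c * x powi k) - f x * (c * (of_int k * x powi (k - 1)))) / (c * x powi k)^2)"
  have uD: "(u has_field_derivative U x) (at x)" if "cmod x = exp r" for x
  proof -
    have x0: "x \<noteq> 0" using that by auto
    show ?thesis unfolding u_def U_def
      by (rule derivative_eq_intros D[OF that] | simp add: x0 c0)+ (simp add: power2_eq_square mult.commute)
  qed
  have u1: "cmod (u x - 1) < 1" if "cmod x = exp r" for x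
  proof -
    have x0: "x \<noteq> 0" using that by auto
    have "u x - 1 = (f x - c * x powi k) / (c * x powi k)" unfolding u_def using x0 c0 by (simp add: field_simps)
    then show ?thesis using dom[OF that] x0 c0 by (simp add: norm_divide divide_less_eq)
  qed
  have uR: "u x \<notin> \<real>\<^sub>\<le>\<^sub>0" if "cmod x = exp r" for x
  proof
    assume "u x \<in> \<real>\<^sub>\<le>\<^sub>0"
    then obtain a where a: "a \<le> 0" "u x = of_real a" by (auto simp: nonpos_Reals_def)
    have ua: "u x - 1 = of_real (a - 1)" using a by simp
    have "cmod (u x - 1) = \<bar>a - 1\<bar>" unfolding ua by (rule norm_of_real)
    then show False using u1[OF that] a by simp
  qed
  have f0: "f x \<noteq> 0" if "cmod x = exp r" for x
    using uR[OF that] unfolding u_def by auto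
  define Phi where "Phi = (\<lambda>t. Ln (u (X t)))"
  have XD: "(X has_vector_derivative (\<i> * X t)) (at t)" for t
  proof -
    have "((\<lambda>z. exp (complex_of_real r + \<i> * z)) has_field_derivative (\<i> * X t)) (at (of_real t))"
      unfolding X_def by (rule derivative_eq_intros | simp)+
    from has_vector_derivative_real_field[OF this] show ?thesis unfolding X_def .
  qed
  have PhiD: "(Phi has_vector_derivative (\<i> * X t * (U (X t) * inverse (u (X t))))) (at t)" for t
  proof -
    have "((\<lambda>x. Ln (u x)) has_field_derivative (U (X t) * inverse (u (X t)))) (at (X t))"
      using DERIV_chain2[OF has_field_derivative_Ln[OF uR[OF normX]] uD[OF normX]] by (simp add: mult.commute)
    from field_vector_diff_chain_at[OF XD this] show ?thesis unfolding Phi_def by (simp add: o_def)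
  qed
  have X2: "X (2*pi) = X 0" unfolding X_def by (simp add: exp_add mult.commute)
  have int0: "((\<lambda>t. \<i> * X t * (U (X t) * inverse (u (X t)))) has_integral 0) {0..2*pi}"
    using fundamental_theorem_of_calculus[of 0 "2*pi" Phi "\<lambda>t. \<i> * X t * (U (X t) * inverse (u (X t)))"]
      PhiD[THEN has_vector_derivative_at_within] X2 unfolding Phi_def by simp
  have intk: "((\<lambda>t. of_int k :: complex) has_integral (of_real (2*pi) * of_int k)) {0..2*pi}"
    using has_integral_const_real[of "of_int k :: complex" 0 "2*pi"] by (simp add: scaleR_conv_of_real)
  have sum: "((\<lambda>t. (of_int k :: complex) + (-\<i>) * (\<i> * X t * (U (X t) * inverse (u (X t))))) has_integral (of_real (2*pi) * of_int k)) {0..2*pi}"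
    using has_integral_add[OF intk has_integral_mult_right[OF int0, of "-\<i>"]] by simp
  have ident: "(of_int k :: complex) + (-\<i>) * (\<i> * X t * (U (X t) * inverse (u (X t)))) = X t * f' (X t) / f (X t)" for t
  proof -
    have x0: "X t \<noteq> 0" by (rule X0)
    have fx: "f (X t) \<noteq> 0" by (rule f0[OF normX])
    have pk: "X t powi (k - 1) = X t powi k / X t" using x0 by (simp add: power_int_diff)
    have pk0: "X t powi k \<noteq> 0" using x0 by simp
    show ?thesis unfolding U_def u_def pk using x0 fx c0 pk0
      by (simp add: field_simps power2_eq_square)
  qed
  show ?thesis using has_integral_eq[OF _ sum, of "\<lambda>t. X t * f' (X t) / f (X t)"] ident unfolding X_def by simp
qed

lemma box_fubini1:
  fixes g :: "real \<Rightarrow> real \<Rightarrow> complex"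
  assumes cont: "continuous_on ({0..2*pi} \<times> {0..2*pi}) (\<lambda>(a,b). g a b)"
    and I: "\<And>b. b \<in> {0..2*pi} \<Longrightarrow> ((\<lambda>a. g a b) has_integral v) {0..2*pi}"
  shows "integral ({0..2*pi} \<times> {0..2*pi}) (\<lambda>(a,b). g a b) = of_real (2*pi) * v"
proof -
  have box: "{0..2*pi} \<times> {0..2*pi} = cbox (0::real, 0::real) (2*pi, 2*pi)"
    by (simp add: cbox_Pair_eq)
  have c2: "continuous_on (cbox (0::real, 0::real) (2*pi, 2*pi)) (\<lambda>(a,b). g a b)" using cont box by simp
  have "integral ({0..2*pi} \<times> {0..2*pi}) (\<lambda>(a,b). g a b)
      = integral (cbox 0 (2*pi)) (\<lambda>a. integral (cbox 0 (2*pi)) (\<lambda>b. g a b))"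
    using integral_prod_continuous[OF c2] box by simp
  also have "\<dots> = integral (cbox 0 (2*pi)) (\<lambda>b. integral (cbox 0 (2*pi)) (\<lambda>a. g a b))"
    by (rule integral_swap_continuous) (use c2 in simp)
  also have "\<dots> = integral {0..2*pi} (\<lambda>b. v)"
    unfolding cbox_interval by (rule integral_cong) (use I integral_unique in auto)
  also have "\<dots> = of_real (2*pi) * v" by (simp add: scaleR_conv_of_real)
  finally show ?thesis .
qed

lemma box_fubini2:
  fixes g :: "real \<Rightarrow> real \<Rightarrow> complex"
  assumes cont: "continuous_on ({0..2*pi} \<times> {0..2*pi}) (\<lambda>(a,b). g a b)"
    and I: "\<And>a. a \<in> {0..2*pi} \<Longrightarrow> ((\<lambda>b. g a b) has_integral v) {0..2*pi}"
  shows "integral ({0..2*pi} \<times> {0..2*pi}) (\<lambda>(a,b). g a b) = of_real (2*pi) * v"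
proof -
  have box: "{0..2*pi} \<times> {0..2*pi} = cbox (0::real, 0::real) (2*pi, 2*pi)"
    by (simp add: cbox_Pair_eq)
  have c2: "continuous_on (cbox (0::real, 0::real) (2*pi, 2*pi)) (\<lambda>(a,b). g a b)" using cont box by simp
  have "integral ({0..2*pi} \<times> {0..2*pi}) (\<lambda>(a,b). g a b)
      = integral (cbox 0 (2*pi)) (\<lambda>a. integral (cbox 0 (2*pi)) (\<lambda>b. g a b))"
    using integral_prod_continuous[OF c2] box by simp
  also have "\<dots> = integral {0..2*pi} (\<lambda>a. v)"
    unfolding cbox_interval by (rule integral_cong) (use I integral_unique in auto)
  also have "\<dots> = of_real (2*pi) * v" by (simp add: scaleR_conv_of_real)
  finally show ?thesis .
qed

lemma norm_torus:
  fixes x y :: complex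
  assumes "cmod x = exp a" "cmod y = exp b"
  shows "cmod (x powi k * y powi l) = exp (of_int k * a + of_int l * b)"
  using assms by (simp add: norm_mult norm_power_int exp_power_int exp_add)

lemma order_dominant:
  fixes c :: "nat \<Rightarrow> complex" and m n :: "nat \<Rightarrow> int" and J :: "nat set" and w :: "real \<times> real"
    and F :: "complex \<Rightarrow> complex \<Rightarrow> complex"
  assumes fin: "finite J" and iJ: "i0 \<in> J"
    and dom: "(\<Sum>j\<in>J-{i0}. cmod (c j) * exp (of_int (m j) * fst w + of_int (n j) * snd w))
              < cmod (c i0) * exp (of_int (m i0) * fst w + of_int (n i0) * snd w)"
    and Fdef: "F = (\<lambda>x y. \<Sum>j\<in>J. c j * x powi m j * y powi n j)"
  shows "w \<notin> amoeba F \<and> order F w = (of_int (m i0), of_int (n i0))"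
proof -
  obtain w1 w2 where w: "w = (w1, w2)" by (cases w)
  have torus: "cmod (F x y - c i0 * x powi m i0 * y powi n i0) < cmod (c i0 * x powi m i0 * y powi n i0)"
    if "cmod x = exp w1" "cmod y = exp w2" for x y
  proof -
    have "F x y - c i0 * x powi m i0 * y powi n i0 = (\<Sum>j\<in>J-{i0}. c j * x powi m j * y powi n j)"
      unfolding Fdef using fin iJ by (simp add: sum_diff1)
    also have "cmod \<dots> \<le> (\<Sum>j\<in>J-{i0}. cmod (c j * x powi m j * y powi n j))"
      by (rule norm_sum)
    also have "\<dots> = (\<Sum>j\<in>J-{i0}. cmod (c j) * exp (of_int (m j) * w1 + of_int (n j) * w2))"
      using norm_torus[OF that] by (simp add: norm_mult mult.assoc)
    also have "\<dots> < cmod (c i0) * exp (of_int (m i0) * w1 + of_int (n i0) * w2)"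
      using dom w by simp
    also have "\<dots> = cmod (c i0 * x powi m i0 * y powi n i0)"
      using norm_torus[OF that] by (simp add: norm_mult mult.assoc)
    finally show ?thesis .
  qed
  have Fnz: "F x y \<noteq> 0" if "cmod x = exp w1" "cmod y = exp w2" for x y
    using torus[OF that] by auto
  have notin: "w \<notin> amoeba F"
  proof
    assume "w \<in> amoeba F"
    then obtain x y where "x \<noteq> 0" "y \<noteq> 0" "F x y = 0" "w = (ln (cmod x), ln (cmod y))"
      unfolding amoeba_def by auto
    then show False using Fnz[of x y] w by auto
  qed
  define X where "X = (\<lambda>t::real. exp (complex_of_real w1 + \<i> * complex_of_real t))"
  define Y where "Y = (\<lambda>t::real. exp (complex_of_real w2 + \<i> * complex_of_real t))"
  have nX: "cmod (X t) = exp w1" for t unfolding X_def by (simp add: norm_exp_eq_Re)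
  have nY: "cmod (Y t) = exp w2" for t unfolding Y_def by (simp add: norm_exp_eq_Re)
  define Fx where "Fx = (\<lambda>x y. \<Sum>j\<in>J. c j * (of_int (m j) * x powi (m j - 1)) * y powi n j)"
  define Fy where "Fy = (\<lambda>x y. \<Sum>j\<in>J. c j * x powi m j * (of_int (n j) * y powi (n j - 1)))"
  have DFx: "((\<lambda>x. F x y) has_field_derivative Fx x y) (at x)" if "x \<noteq> 0" for x y
    unfolding Fdef Fx_def using that
    by (intro DERIV_sum) (rule derivative_eq_intros | simp)+
  have DFy: "((\<lambda>y. F x y) has_field_derivative Fy x y) (at y)" if "y \<noteq> 0" for x y
    unfolding Fdef Fy_def using that
    by (intro DERIV_sum) (rule derivative_eq_intros | simp)+
  have contF: "continuous_on ({0..2*pi} \<times> {0..2*pi}) (\<lambda>(a,b). F (X a) (Y b))"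
    unfolding Fdef X_def Y_def by (auto simp: case_prod_beta intro!: continuous_intros)
  have contFx: "continuous_on ({0..2*pi} \<times> {0..2*pi}) (\<lambda>(a,b). Fx (X a) (Y b))"
    unfolding Fx_def X_def Y_def by (auto simp: case_prod_beta intro!: continuous_intros)
  have contFy: "continuous_on ({0..2*pi} \<times> {0..2*pi}) (\<lambda>(a,b). Fy (X a) (Y b))"
    unfolding Fy_def X_def Y_def by (auto simp: case_prod_beta intro!: continuous_intros)
  have contX: "continuous_on ({0..2*pi} \<times> {0..2*pi}) (\<lambda>(a,b). X a)"
    unfolding X_def by (auto simp: case_prod_beta intro!: continuous_intros)
  have contY: "continuous_on ({0..2*pi} \<times> {0..2*pi}) (\<lambda>(a,b). Y b)"
    unfolding Y_def by (auto simp: case_prod_beta intro!: continuous_intros)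
  have c1: "continuous_on ({0..2*pi} \<times> {0..2*pi}) (\<lambda>(a,b). X a * Fx (X a) (Y b) / F (X a) (Y b))"
    using continuous_on_divide[OF continuous_on_mult[OF contX contFx] contF] Fnz nX nY
    by (simp add: case_prod_beta)
  have c2: "continuous_on ({0..2*pi} \<times> {0..2*pi}) (\<lambda>(a,b). Y b * Fy (X a) (Y b) / F (X a) (Y b))"
    using continuous_on_divide[OF continuous_on_mult[OF contY contFy] contF] Fnz nX nY
    by (simp add: case_prod_beta)
  have I1: "((\<lambda>a. X a * Fx (X a) (Y b) / F (X a) (Y b)) has_integral (of_real (2*pi) * of_int (m i0))) {0..2*pi}" for b
  proof -
    have "((\<lambda>t. exp (complex_of_real w1 + \<i> * complex_of_real t) * Fx (exp (complex_of_real w1 + \<i> * complex_of_real t)) (Y b)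
             / F (exp (complex_of_real w1 + \<i> * complex_of_real t)) (Y b)) has_integral (of_real (2*pi) * of_int (m i0))) {0..2*pi}"
    proof (rule circle_int[where c = "c i0 * Y b powi n i0"])
      fix x :: complex assume h: "cmod x = exp w1"
      then have "x \<noteq> 0" by auto
      then show "((\<lambda>x. F x (Y b)) has_field_derivative Fx x (Y b)) (at x)" by (rule DFx)
      show "cmod (F x (Y b) - c i0 * Y b powi n i0 * x powi m i0) < cmod (c i0 * Y b powi n i0 * x powi m i0)"
        using torus[OF h nY[of b]] by (simp add: ac_simps)
    qed
    then show ?thesis unfolding X_def .
  qed
  have I2: "((\<lambda>b. Y b * Fy (X a) (Y b) / F (X a) (Y b)) has_integral (of_real (2*pi) * of_int (n i0))) {0..2*pi}" for a
  proof -
    have "((\<lambda>t. exp (complex_of_real w2 + \<i> * complex_of_real t) * Fy (X a) (exp (complex_of_real w2 + \<i> * complex_of_real t))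
             / F (X a) (exp (complex_of_real w2 + \<i> * complex_of_real t))) has_integral (of_real (2*pi) * of_int (n i0))) {0..2*pi}"
    proof (rule circle_int[where c = "c i0 * X a powi m i0"])
      fix y :: complex assume h: "cmod y = exp w2"
      then have "y \<noteq> 0" by auto
      then show "((\<lambda>y. F (X a) y) has_field_derivative Fy (X a) y) (at y)" by (rule DFy)
      show "cmod (F (X a) y - c i0 * X a powi m i0 * y powi n i0) < cmod (c i0 * X a powi m i0 * y powi n i0)"
        using torus[OF nX[of a] h] by (simp add: ac_simps)
    qed
    then show ?thesis unfolding Y_def .
  qed
  have e1: "integral ({0..2*pi} \<times> {0..2*pi}) (\<lambda>(t1, t2). X t1 * deriv (\<lambda>x. F x (Y t2)) (X t1) / F (X t1) (Y t2))
      = integral ({0..2*pi} \<times> {0..2*pi}) (\<lambda>(a,b). X a * Fx (X a) (Y b) / F (X a) (Y b))"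
  proof (rule integral_cong)
    fix z assume "z \<in> {0..2*pi} \<times> {0..2*pi}"
    have "X (fst z) \<noteq> 0" unfolding X_def by simp
    then show "(case z of (t1, t2) \<Rightarrow> X t1 * deriv (\<lambda>x. F x (Y t2)) (X t1) / F (X t1) (Y t2)) =
         (case z of (a, b) \<Rightarrow> X a * Fx (X a) (Y b) / F (X a) (Y b))"
      using DERIV_imp_deriv[OF DFx] by (simp add: case_prod_beta)
  qed
  have e2: "integral ({0..2*pi} \<times> {0..2*pi}) (\<lambda>(t1, t2). Y t2 * deriv (\<lambda>y. F (X t1) y) (Y t2) / F (X t1) (Y t2))
      = integral ({0..2*pi} \<times> {0..2*pi}) (\<lambda>(a,b). Y b * Fy (X a) (Y b) / F (X a) (Y b))"
  proof (rule integral_cong)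
    fix z assume "z \<in> {0..2*pi} \<times> {0..2*pi}"
    have "Y (snd z) \<noteq> 0" unfolding Y_def by simp
    then show "(case z of (t1, t2) \<Rightarrow> Y t2 * deriv (\<lambda>y. F (X t1) y) (Y t2) / F (X t1) (Y t2)) =
         (case z of (a, b) \<Rightarrow> Y b * Fy (X a) (Y b) / F (X a) (Y b))"
      using DERIV_imp_deriv[OF DFy] by (simp add: case_prod_beta)
  qed
  have v1: "integral ({0..2*pi} \<times> {0..2*pi}) (\<lambda>(a,b). X a * Fx (X a) (Y b) / F (X a) (Y b))
      = of_real (2*pi) * (of_real (2*pi) * of_int (m i0))"
    using box_fubini1[OF c1 I1] .
  have v2: "integral ({0..2*pi} \<times> {0..2*pi}) (\<lambda>(a,b). Y b * Fy (X a) (Y b) / F (X a) (Y b))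
      = of_real (2*pi) * (of_real (2*pi) * of_int (n i0))"
    using box_fubini2[OF c2 I2] .
  have "order F w = (of_int (m i0), of_int (n i0))"
    unfolding order_def Let_def w fst_conv snd_conv X_def[symmetric] Y_def[symmetric] e1 e2 v1 v2
    by (simp add: power2_eq_square)
  with notin show ?thesis by simp
qed



lemma sum4:
  fixes g :: "nat \<Rightarrow> 'a::comm_ring_1"
  assumes "finite V" "j \<in> V" "a \<in> V" "b \<in> V" "i \<in> V"
  shows "(\<Sum>x\<in>V. ((if x=j then c1 else 0) + (if x=a then c2 else 0) + (if x=b then c3 else 0)
            + (if x=i then c4 else 0)) * g x) = c1*g j + c2*g a + c3*g b + c4*g i"
proof -
  have e: "((if x=j then c1 else 0) + (if x=a then c2 else 0) + (if x=b then c3 else 0)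
            + (if x=i then c4 else 0)) * g x = (if x=j then c1 * g x else 0) + (if x=a then c2 * g x else 0)
       + (if x=b then c3 * g x else 0) + (if x=i then c4 * g x else 0)" for x
    by (simp add: ring_distribs)
  show ?thesis unfolding e sum.distrib using assms by (simp add: sum.delta)
qed

lemma det_zero_col:
  assumes "c < p" "\<forall>r<p. M r c = 0"
  shows "det_sq p M = 0"
  unfolding det_sq_def
proof (rule sum.neutral, intro ballI)
  fix \<pi> assume "\<pi> \<in> {\<pi>. \<pi> permutes {0..<p}}"
  then have pp: "\<pi> permutes {0..<p}" by simp
  then have "\<pi> ` {0..<p} = {0..<p}" by (rule permutes_image)
  then have "c \<in> \<pi> ` {0..<p}" using assms(1) by simp
  then obtain r where r: "r < p" "\<pi> r = c" by auto
  have "(\<Prod>i<p. M i (\<pi> i)) = 0"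
    by (rule prod_zero) (use r assms(2) in auto)
  then show "of_int (sign \<pi>) * (\<Prod>i<p. M i (\<pi> i)) = 0" by simp
qed

lemma tri_at:
  assumes "unimodular_triangle m n \<sigma>" "i \<in> \<sigma>"
  shows "\<exists>a b. \<sigma> = {i,a,b} \<and> i \<noteq> a \<and> i \<noteq> b \<and> a \<noteq> b \<and>
           \<bar>(m a - m i) * (n b - n i) - (m b - m i) * (n a - n i)\<bar> = 1"
proof -
  obtain x y z where h: "\<sigma> = {x,y,z}" "x \<noteq> y" "x \<noteq> z" "y \<noteq> z"
     "\<bar>(m y - m x) * (n z - n x) - (m z - m x) * (n y - n x)\<bar> = 1"
    using assms(1) unfolding unimodular_triangle_def by blast
  have e1: "(m x - m y) * (n z - n y) - (m z - m y) * (n x - n y) = - ((m y - m x) * (n z - n x) - (m z - m x) * (n y - n x))"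
    by (simp add: algebra_simps)
  have e2: "(m x - m z) * (n y - n z) - (m y - m z) * (n x - n z) = ((m y - m x) * (n z - n x) - (m z - m x) * (n y - n x))"
    by (simp add: algebra_simps)
  have s2: "{x,y,z} = {y,x,z}" "{x,y,z} = {z,x,y}" by auto
  consider "i = x" | "i = y" | "i = z" using assms(2) h(1) by auto
  then show ?thesis
  proof cases
    case 1 show ?thesis
      apply (rule exI[of _ y], rule exI[of _ z])
      using h unfolding 1 by simp
  next
    case 2 show ?thesis
      apply (rule exI[of _ x], rule exI[of _ z])
      using h e1 s2 unfolding 2 by simp
  next
    case 3 show ?thesis
      apply (rule exI[of _ x], rule exI[of _ y])
      using h e2 s2 unfolding 3 by simp
  qed
qed

lemma col_nonzero:
  assumes "\<sigma> \<subseteq> {1..p+3}" "card \<sigma> = 3" "j \<in> {1..p+3} - \<sigma>"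
    and "det_sq p (s_matrix p s \<sigma>) \<noteq> 0"
  shows "\<exists>k\<in>{1..p}. s \<sigma> k j \<noteq> 0"
proof (rule ccontr)
  assume nz: "\<not> (\<exists>k\<in>{1..p}. s \<sigma> k j \<noteq> 0)"
  define xs where "xs = sorted_list_of_set ({1..p+3} - \<sigma>)"
  have fin: "finite \<sigma>" using assms(2) card.infinite by fastforce
  have "card ({1..p+3} - \<sigma>) = p" using assms(1,2) fin by (simp add: card_Diff_subset)
  then have len: "length xs = p" unfolding xs_def by simp
  have "j \<in> set xs" unfolding xs_def using assms(3) by simp
  then obtain c where c: "c < p" "xs ! c = j" using len by (auto simp: in_set_conv_nth)
  have "\<forall>r<p. s_matrix p s \<sigma> r c = 0"
    unfolding s_matrix_def xs_def[symmetric] using c nz by auto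
  then have "det_sq p (s_matrix p s \<sigma>) = 0" using det_zero_col c by blast
  then show False using assms(4) by simp
qed

lemma absdet_bound:
  fixes x1 x2 y1 y2 :: int
  shows "\<bar>x1*y2 - y1*x2\<bar> \<le> (\<bar>x1\<bar>+\<bar>x2\<bar>)*(\<bar>y1\<bar>+\<bar>y2\<bar>)"
proof -
  have "\<bar>x1*y2 - y1*x2\<bar> \<le> \<bar>x1\<bar>*\<bar>y2\<bar> + \<bar>y1\<bar>*\<bar>x2\<bar>"
    using abs_triangle_ineq4[of "x1*y2" "y1*x2"] by (simp add: abs_mult)
  also have "\<dots> \<le> (\<bar>x1\<bar>+\<bar>x2\<bar>)*(\<bar>y1\<bar>+\<bar>y2\<bar>)"
    by (simp add: algebra_simps)
  finally show ?thesis .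
qed



theorem theorem3p3:
  fixes p :: nat and m n :: "nat \<Rightarrow> int" and T :: "nat set set"
    and s :: "nat set \<Rightarrow> nat \<Rightarrow> nat \<Rightarrow> nat" and Hc :: "nat \<Rightarrow> (nat \<Rightarrow> int) \<Rightarrow> rat"
  assumes distinct: "inj_on (\<lambda>i. (m i, n i)) {1..p+3}"
    and lattice_pts: "{z :: int \<times> int. (real_of_int (fst z), real_of_int (snd z))
                          \<in> convex hull (lpt m n ` {1..p+3})} = (\<lambda>i. (m i, n i)) ` {1..p+3}"
    and b1: "m 1 = 1 \<and> n 1 = 0" and b2: "m 2 = 0 \<and> n 2 = 1" and b3: "m 3 = 0 \<and> n 3 = 0"
    and triang: "unimodular_triangulation m n {1..p+3} T"
    and sigma1: "{1, 2, 3} \<in> T"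
    and H_expansion: "\<forall>\<sigma>\<in>T. \<forall>k\<in>{1..p}. \<forall>l\<in>lattice_L m n (p+3).
                        Hc k l = (\<Sum>j\<in>{1..p+3} - \<sigma>. of_nat (s \<sigma> k j) * of_int (l j))"
    and nondegenerate: "\<forall>\<sigma>\<in>T. det_sq p (s_matrix p s \<sigma>) \<noteq> 0"
  shows "\<exists>\<epsilon>>0. \<forall>q :: nat \<Rightarrow> complex. (\<forall>k\<in>{1..p}. q k \<noteq> 0 \<and> cmod (q k) < \<epsilon>) \<longrightarrow>
           (\<forall>z :: int \<times> int. (real_of_int (fst z), real_of_int (snd z))
                                \<in> convex hull (lpt m n ` {1..p+3}) \<longrightarrow>
              (\<exists>w. w \<notin> amoeba (mirror_H p m n (s {1, 2, 3}) q) \<and>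
                   order (mirror_H p m n (s {1, 2, 3}) q) w
                     = (of_int (fst z), of_int (snd z))))"
proof -
  define V where "V = {1..p+3::nat}"
  define s1 where "s1 = s {1,2,3}"
  define B :: int where "B = (\<Sum>x\<in>V. \<bar>m x\<bar> + \<bar>n x\<bar>)"
  define C :: real where "C = ln (real p + 3)"
  define L0 where "L0 = C * (1 + 8 * real_of_int B ^ 2)"
  have finV: "finite V" unfolding V_def by simp
  have Cpos: "C > 0" unfolding C_def by simp
  have L0pos: "L0 > 0" unfolding L0_def using Cpos by (simp add: add_pos_nonneg)
  have L0eq: "L0 = C + C * (8 * real_of_int B ^ 2)" unfolding L0_def by (simp add: algebra_simps)
  have Bj: "\<bar>m x\<bar> + \<bar>n x\<bar> \<le> B" if "x \<in> V" for x
    unfolding B_def using finV that by (intro member_le_sum) auto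
  have detb: "\<bar>(m u - m i) * (n v - n i) - (m v - m i) * (n u - n i)\<bar> \<le> 4 * B^2"
    if "u \<in> V" "v \<in> V" "i \<in> V" for u v i
  proof -
    have h1: "\<bar>m u - m i\<bar> + \<bar>n u - n i\<bar> \<le> 2 * B" using Bj[OF that(1)] Bj[OF that(3)] by linarith
    have h2: "\<bar>m v - m i\<bar> + \<bar>n v - n i\<bar> \<le> 2 * B" using Bj[OF that(2)] Bj[OF that(3)] by linarith
    have "\<bar>(m u - m i) * (n v - n i) - (m v - m i) * (n u - n i)\<bar>
          \<le> (\<bar>m u - m i\<bar> + \<bar>n u - n i\<bar>) * (\<bar>m v - m i\<bar> + \<bar>n v - n i\<bar>)"
      by (rule absdet_bound)
    also have "\<dots> \<le> (2 * B) * (2 * B)"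
      by (rule mult_mono[OF h1 h2]) (use h1 in auto)
    finally show ?thesis by (simp add: power2_eq_square)
  qed
  show ?thesis
  proof (rule exI[of _ "exp (-L0)"], intro conjI allI impI)
    show "exp (-L0) > 0" by simp
    fix q :: "nat \<Rightarrow> complex" and z :: "int \<times> int"
    assume hq: "\<forall>k\<in>{1..p}. q k \<noteq> 0 \<and> cmod (q k) < exp (-L0)"
    assume hz: "(real_of_int (fst z), real_of_int (snd z)) \<in> convex hull (lpt m n ` {1..p+3})"
    have "z \<in> (\<lambda>i. (m i, n i)) ` {1..p+3}" using hz lattice_pts by blast
    then obtain i where iV: "i \<in> V" and zi: "z = (m i, n i)" unfolding V_def by blast
    define t where "t k = - ln (cmod (q k))" for k
    have tL: "t k > L0" if "k \<in> {1..p}" for k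
    proof -
      have "cmod (q k) > 0" "cmod (q k) < exp (-L0)" using hq that by auto
      then have "ln (cmod (q k)) < -L0" using ln_less_cancel_iff[of "cmod (q k)" "exp (-L0)"] by simp
      then show ?thesis unfolding t_def by simp
    qed
    define h where "h x = (if x \<le> 3 then 0 else (\<Sum>k=1..p. t k * real (s1 k x)))" for x
    define c where "c x = (if x \<le> 3 then 1 else (\<Prod>k=1..p. q k ^ s1 k x))" for x
    have cn: "cmod (c x) = exp (- h x)" for x
    proof (cases "x \<le> 3")
      case True then show ?thesis unfolding c_def h_def by simp
    next
      case False
      have "cmod (c x) = (\<Prod>k=1..p. cmod (q k) ^ s1 k x)"
        unfolding c_def using False by (simp add: prod_norm[symmetric] norm_power)
      also have "\<dots> = (\<Prod>k=1..p. exp (real (s1 k x) * (- t k)))"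
      proof (rule prod.cong[OF refl])
        fix k assume "k \<in> {1..p}"
        then have "cmod (q k) > 0" using hq by auto
        then have "exp (- t k) = cmod (q k)" unfolding t_def by simp
        then show "cmod (q k) ^ s1 k x = exp (real (s1 k x) * (- t k))"
          using exp_of_nat_mult[of "s1 k x" "- t k"] by simp
      qed
      also have "\<dots> = exp (\<Sum>k=1..p. real (s1 k x) * (- t k))" by (simp add: exp_sum)
      also have "\<dots> = exp (- h x)" unfolding h_def using False
        by (simp add: sum_negf mult.commute)
      finally show ?thesis .
    qed
    obtain \<sigma> where \<sigma>T: "\<sigma> \<in> T" and i\<sigma>: "i \<in> \<sigma>"
      using triang iV unfolding unimodular_triangulation_def V_def by blast
    have \<sigma>V: "\<sigma> \<subseteq> V" and uni: "unimodular_triangle m n \<sigma>"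
      using triang \<sigma>T unfolding unimodular_triangulation_def V_def by auto
    obtain a b where \<sigma>ab: "\<sigma> = {i,a,b}" "i \<noteq> a" "i \<noteq> b" "a \<noteq> b"
      and Dabs: "\<bar>(m a - m i) * (n b - n i) - (m b - m i) * (n a - n i)\<bar> = 1"
      using tri_at[OF uni i\<sigma>] by blast
    have aV: "a \<in> V" and bV: "b \<in> V" using \<sigma>V \<sigma>ab by auto
    have card\<sigma>: "card \<sigma> = 3" using \<sigma>ab by simp
    define D where "D = (m a - m i) * (n b - n i) - (m b - m i) * (n a - n i)"
    have DD: "D * D = 1" using Dabs unfolding D_def[symmetric] by (cases "D < 0") (auto split: if_splits)
    define Ra where "Ra = h a - h i - C"
    define Rb where "Rb = h b - h i - C"
    define u1 where "u1 = real_of_int (m a - m i)"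
    define u2 where "u2 = real_of_int (n a - n i)"
    define v1 where "v1 = real_of_int (m b - m i)"
    define v2 where "v2 = real_of_int (n b - n i)"
    have Dr: "real_of_int D = u1 * v2 - v1 * u2" unfolding D_def u1_def u2_def v1_def v2_def by simp
    have DDr0: "real_of_int (D * D) = 1" using DD by simp
    have DDr: "real_of_int D * real_of_int D = 1" using DDr0 by simp
    define w1 where "w1 = real_of_int D * (Ra * v2 - Rb * u2)"
    define w2 where "w2 = real_of_int D * (u1 * Rb - v1 * Ra)"
    have wa: "u1 * w1 + u2 * w2 = Ra"
    proof -
      have "u1 * w1 + u2 * w2 = real_of_int D * (u1 * v2 - v1 * u2) * Ra"
        unfolding w1_def w2_def by (simp add: algebra_simps)
      then show ?thesis using DDr Dr by simp
    qed
    have wb: "v1 * w1 + v2 * w2 = Rb"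
    proof -
      have "v1 * w1 + v2 * w2 = real_of_int D * (u1 * v2 - v1 * u2) * Rb"
        unfolding w1_def w2_def by (simp add: algebra_simps)
      then show ?thesis using DDr Dr by simp
    qed
    have key: "h j - h i - (real_of_int (m j - m i) * w1 + real_of_int (n j - n i) * w2) \<ge> C"
      if jV: "j \<in> V" and ji: "j \<noteq> i" for j
    proof -
      consider "j = a" | "j = b" | "j \<notin> \<sigma>" using \<sigma>ab ji by auto
      then show ?thesis
      proof cases
        case 1 then show ?thesis using wa unfolding u1_def u2_def Ra_def by simp
      next
        case 2 then show ?thesis using wb unfolding v1_def v2_def Rb_def by simp
      next
        case 3
        have jVs: "j \<in> V - \<sigma>" using 3 jV by simp
        have ja: "j \<noteq> a" and jb: "j \<noteq> b" using 3 \<sigma>ab by auto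
        define la where "la = D * ((m j - m i) * (n b - n i) - (m b - m i) * (n j - n i))"
        define lb where "lb = D * ((m a - m i) * (n j - n i) - (m j - m i) * (n a - n i))"
        have x1: "m j - m i = la * (m a - m i) + lb * (m b - m i)"
        proof -
          have "la * (m a - m i) + lb * (m b - m i) = (D * D) * (m j - m i)"
            unfolding la_def lb_def D_def by (simp add: algebra_simps)
          then show ?thesis using DD by simp
        qed
        have x2: "n j - n i = la * (n a - n i) + lb * (n b - n i)"
        proof -
          have "la * (n a - n i) + lb * (n b - n i) = (D * D) * (n j - n i)"
            unfolding la_def lb_def D_def by (simp add: algebra_simps)
          then show ?thesis using DD by simp
        qed
        have x1r: "real_of_int (m j - m i) = real_of_int la * u1 + real_of_int lb * v1"
          unfolding u1_def v1_def by (simp only: x1 of_int_add of_int_mult)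
        have x2r: "real_of_int (n j - n i) = real_of_int la * u2 + real_of_int lb * v2"
          unfolding u2_def v2_def by (simp only: x2 of_int_add of_int_mult)
        have wj: "real_of_int (m j - m i) * w1 + real_of_int (n j - n i) * w2
                  = real_of_int la * Ra + real_of_int lb * Rb"
        proof -
          have "real_of_int (m j - m i) * w1 + real_of_int (n j - n i) * w2
                = real_of_int la * (u1 * w1 + u2 * w2) + real_of_int lb * (v1 * w1 + v2 * w2)"
            unfolding x1r x2r by (simp add: algebra_simps)
          then show ?thesis by (simp only: wa wb)
        qed
        have laB: "\<bar>la\<bar> \<le> 4 * B^2"
        proof -
          have "\<bar>la\<bar> = \<bar>D\<bar> * \<bar>(m j - m i) * (n b - n i) - (m b - m i) * (n j - n i)\<bar>"
            unfolding la_def by (simp add: abs_mult)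
          also have "\<dots> \<le> 4 * B^2" using Dabs detb[OF jV bV iV] unfolding D_def by simp
          finally show ?thesis .
        qed
        have lbB: "\<bar>lb\<bar> \<le> 4 * B^2"
        proof -
          have "\<bar>lb\<bar> = \<bar>D\<bar> * \<bar>(m a - m i) * (n j - n i) - (m j - m i) * (n a - n i)\<bar>"
            unfolding lb_def by (simp add: abs_mult)
          also have "\<dots> \<le> 4 * B^2" using Dabs detb[OF aV jV iV] unfolding D_def by simp
          finally show ?thesis .
        qed
        define l where "l x = (if x=j then 1 else 0) + (if x=a then -la else 0) + (if x=b then -lb else 0)
                               + (if x=i then la+lb-1 else 0)" for x
        have lsum: "(\<Sum>x\<in>V. l x * g x) = g j - la * g a - lb * g b + (la+lb-1) * g i" for g :: "nat \<Rightarrow> int"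
          unfolding l_def using sum4[OF finV jV aV bV iV, of 1 "-la" "-lb" "la+lb-1" g] by simp
        have lL: "l \<in> lattice_L m n (p+3)"
        proof -
          have z: "\<forall>x. x \<notin> {1..p+3} \<longrightarrow> l x = 0"
            using jV aV bV iV unfolding l_def V_def by auto
          have sm: "(\<Sum>x=1..p+3. l x * m x) = 0"
          proof -
            have "(\<Sum>x=1..p+3. l x * m x) = m j - la * m a - lb * m b + (la+lb-1) * m i"
              using lsum[of m] unfolding V_def .
            also have "\<dots> = (m j - m i) - (la * (m a - m i) + lb * (m b - m i))"
              by (simp add: algebra_simps)
            also have "\<dots> = 0" using x1 by simp
            finally show ?thesis .
          qed
          have sn: "(\<Sum>x=1..p+3. l x * n x) = 0"
          proof -
            have "(\<Sum>x=1..p+3. l x * n x) = n j - la * n a - lb * n b + (la+lb-1) * n i"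
              using lsum[of n] unfolding V_def .
            also have "\<dots> = (n j - n i) - (la * (n a - n i) + lb * (n b - n i))"
              by (simp add: algebra_simps)
            also have "\<dots> = 0" using x2 by simp
            finally show ?thesis .
          qed
          have s1': "(\<Sum>x=1..p+3. l x) = 0"
            using lsum[of "\<lambda>_. 1"] unfolding V_def by simp
          show ?thesis unfolding lattice_L_def using z sm sn s1' by blast
        qed
        have hk: "real (s \<sigma> k j) = (\<Sum>x\<in>V - {1,2,3}. real (s1 k x) * real_of_int (l x))"
          if k: "k \<in> {1..p}" for k
        proof -
          have e\<sigma>: "Hc k l = (\<Sum>x\<in>V - \<sigma>. of_nat (s \<sigma> k x) * of_int (l x))"
            using H_expansion \<sigma>T k lL unfolding V_def by blast
          have e1: "Hc k l = (\<Sum>x\<in>V - {1,2,3}. of_nat (s1 k x) * of_int (l x))"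
            using H_expansion sigma1 k lL unfolding V_def s1_def by blast
          have "(\<Sum>x\<in>V - \<sigma>. of_nat (s \<sigma> k x) * (of_int (l x) :: rat))
                = (\<Sum>x\<in>V - \<sigma>. if x = j then of_nat (s \<sigma> k j) else 0)"
          proof (rule sum.cong[OF refl])
            fix x assume "x \<in> V - \<sigma>"
            then have "x \<noteq> a" "x \<noteq> b" "x \<noteq> i" using \<sigma>ab by auto
            then show "of_nat (s \<sigma> k x) * (of_int (l x) :: rat) = (if x = j then of_nat (s \<sigma> k j) else 0)"
              unfolding l_def by auto
          qed
          also have "\<dots> = of_nat (s \<sigma> k j)" using jVs finV by simp
          finally have "(of_nat (s \<sigma> k j) :: rat) = (\<Sum>x\<in>V - {1,2,3}. of_nat (s1 k x) * of_int (l x))"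
            using e\<sigma> e1 by simp
          then have "(of_rat (of_nat (s \<sigma> k j)) :: real) = of_rat (\<Sum>x\<in>V - {1,2,3}. of_nat (s1 k x) * of_int (l x))"
            by simp
          then show ?thesis by (simp add: of_rat_sum of_rat_mult)
        qed
        define E where "E = h j - real_of_int la * h a - real_of_int lb * h b + real_of_int (la+lb-1) * h i"
        have Eeq: "E = (\<Sum>k=1..p. t k * real (s \<sigma> k j))"
        proof -
          have "(\<Sum>k=1..p. t k * real (s \<sigma> k j))
               = (\<Sum>k=1..p. \<Sum>x\<in>V - {1,2,3}. t k * (real (s1 k x) * real_of_int (l x)))"
            by (simp add: hk sum_distrib_left)
          also have "\<dots> = (\<Sum>x\<in>V - {1,2,3}. \<Sum>k=1..p. t k * (real (s1 k x) * real_of_int (l x)))"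
            by (rule sum.swap)
          also have "\<dots> = (\<Sum>x\<in>V - {1,2,3}. real_of_int (l x) * h x)"
          proof (rule sum.cong[OF refl])
            fix x assume "x \<in> V - {1,2,3}"
            then have "\<not> x \<le> 3" unfolding V_def by auto
            then show "(\<Sum>k=1..p. t k * (real (s1 k x) * real_of_int (l x))) = real_of_int (l x) * h x"
              unfolding h_def by (simp add: sum_distrib_left sum_distrib_right algebra_simps)
          qed
          also have "\<dots> = (\<Sum>x\<in>V. real_of_int (l x) * h x)"
          proof (rule sum.mono_neutral_left[OF finV])
            show "V - {1, 2, 3} \<subseteq> V" by auto
            show "\<forall>x\<in>V - (V - {1, 2, 3}). real_of_int (l x) * h x = 0"
              unfolding h_def by auto
          qed
          also have "\<dots> = E"
          proof -
            have lr: "real_of_int (l x) = (if x=j then 1 else 0) + (if x=a then - real_of_int la else 0)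
                 + (if x=b then - real_of_int lb else 0) + (if x=i then real_of_int (la+lb-1) else 0)" for x
              unfolding l_def by simp
            show ?thesis unfolding lr E_def
              using sum4[OF finV jV aV bV iV, of 1 "- real_of_int la" "- real_of_int lb" "real_of_int (la+lb-1)" h]
              by simp
          qed
          finally show ?thesis by simp
        qed
        obtain k0 where k0: "k0 \<in> {1..p}" "s \<sigma> k0 j \<noteq> 0"
          using col_nonzero[of \<sigma> p j s] \<sigma>V card\<sigma> jVs nondegenerate \<sigma>T unfolding V_def by blast
        have EL: "E \<ge> L0"
        proof -
          have "L0 \<le> t k0" using tL[OF k0(1)] by simp
          also have "\<dots> \<le> t k0 * real (s \<sigma> k0 j)" using k0(2) tL[OF k0(1)] L0pos by simp
          also have "\<dots> \<le> (\<Sum>k=1..p. t k * real (s \<sigma> k j))"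
          proof (rule member_le_sum)
            have nn: "0 \<le> t k * real (s \<sigma> k j)" if "k \<in> {1..p}" for k
            proof -
              have "0 \<le> t k" using tL[OF that] L0pos by linarith
              then show ?thesis by (rule mult_nonneg_nonneg) simp
            qed
            show "\<And>x. x \<in> {1..p} - {k0} \<Longrightarrow> 0 \<le> t x * real (s \<sigma> x j)" using nn by simp
          qed (use k0(1) in simp_all)
          finally show ?thesis using Eeq by simp
        qed
        have lab: "real_of_int (la + lb) \<ge> - (8 * real_of_int B ^ 2)"
        proof -
          have "la + lb \<ge> - (8 * B^2)" using laB lbB by linarith
          then have "real_of_int (la + lb) \<ge> real_of_int (- (8 * B^2))" by (simp only: of_int_le_iff)
          then show ?thesis by simp
        qed
        have Cl: "C * real_of_int (la + lb) \<ge> C * (- (8 * real_of_int B ^ 2))"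
          by (rule mult_left_mono[OF lab]) (use Cpos in simp)
        have "h j - h i - (real_of_int (m j - m i) * w1 + real_of_int (n j - n i) * w2)
              = E + C * real_of_int (la + lb)"
          unfolding wj E_def Ra_def Rb_def by (simp add: algebra_simps)
        then show ?thesis using EL Cl L0eq by linarith
      qed
    qed
    show "\<exists>w. w \<notin> amoeba (mirror_H p m n (s {1, 2, 3}) q) \<and>
                   order (mirror_H p m n (s {1, 2, 3}) q) w = (of_int (fst z), of_int (snd z))"
    proof -
      define Ti where "Ti = exp (- h i + real_of_int (m i) * w1 + real_of_int (n i) * w2)"
      have Tipos: "Ti > 0" unfolding Ti_def by simp
      have expC: "exp C = real p + 3" unfolding C_def by simp
      have termb: "cmod (c j) * exp (real_of_int (m j) * fst (w1, w2) + real_of_int (n j) * snd (w1, w2))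
                   \<le> Ti / (real p + 3)" if "j \<in> V - {i}" for j
      proof -
        have k: "h j - h i - (real_of_int (m j - m i) * w1 + real_of_int (n j - n i) * w2) \<ge> C"
          using key that by auto
        have le: "- h j + real_of_int (m j) * w1 + real_of_int (n j) * w2
                 \<le> (- h i + real_of_int (m i) * w1 + real_of_int (n i) * w2) - C"
          using k by (simp add: algebra_simps)
        have "cmod (c j) * exp (real_of_int (m j) * fst (w1, w2) + real_of_int (n j) * snd (w1, w2))
              = exp (- h j + real_of_int (m j) * w1 + real_of_int (n j) * w2)"
          by (simp add: cn exp_add[symmetric])
        also have "\<dots> \<le> exp ((- h i + real_of_int (m i) * w1 + real_of_int (n i) * w2) - C)"
          using le by simp
        also have "\<dots> = Ti / (real p + 3)" unfolding Ti_def exp_diff expC ..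
        finally show ?thesis .
      qed
      have cardVi: "card (V - {i}) = p + 2" using iV unfolding V_def by simp
      have "(\<Sum>j\<in>V - {i}. cmod (c j) * exp (real_of_int (m j) * fst (w1, w2) + real_of_int (n j) * snd (w1, w2)))
            \<le> real (card (V - {i})) * (Ti / (real p + 3))"
        by (rule sum_bounded_above) (use termb in auto)
      also have "\<dots> = (real p + 2) / (real p + 3) * Ti" using cardVi by simp
      also have "\<dots> < Ti" using Tipos by (simp add: divide_less_eq)
      also have "Ti = cmod (c i) * exp (real_of_int (m i) * fst (w1, w2) + real_of_int (n i) * snd (w1, w2))"
        unfolding Ti_def by (simp add: cn exp_add[symmetric])
      finally have dom: "(\<Sum>j\<in>V - {i}. cmod (c j) * exp (real_of_int (m j) * fst (w1, w2) + real_of_int (n j) * snd (w1, w2)))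
            < cmod (c i) * exp (real_of_int (m i) * fst (w1, w2) + real_of_int (n i) * snd (w1, w2))" .
      have Fdef: "mirror_H p m n (s {1, 2, 3}) q = (\<lambda>x y. \<Sum>j\<in>V. c j * x powi m j * y powi n j)"
        by (intro ext) (simp only: mirror_H_def c_def s1_def V_def)
      have "(w1, w2) \<notin> amoeba (mirror_H p m n (s {1, 2, 3}) q) \<and>
            order (mirror_H p m n (s {1, 2, 3}) q) (w1, w2) = (of_int (m i), of_int (n i))"
        by (rule order_dominant[OF finV iV dom Fdef])
      then show ?thesis using zi by auto
    qed
  qed
qed

thm_deps theorem3p3

end
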